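(* Let $G$ be a finite connected undirected graph with vertices $v_1,\dots,v_n$ whose adjacency matrix $A(G)$ has Perron–Frobenius eigenvalue $\lambda_1>0$ with $|\mu|<\lambda_1$ for every other eigenvalue $\mu$. Let $\Gamma$ be a finite group, $\gamma:V(G)\to\Gamma$, $t_m=\gamma(v_m)$, and suppose $t_1,\dots,t_n$ generate $\Gamma$. Let $\rho$ be a nontrivial irreducible unitary representation of $\Gamma$ of dimension $k$, and assume it is not the case that $\rho$ is one-dimensional with $\rho(t_1)=\rho(t_2)=\dots=\rho(t_n)$. Let $U_\rho=\mathrm{diag}(\rho(t_1),\dots,\rho(t_n))$ and $A_\rho=A(G)\otimes I_k$. Then the spectral radius of $U_\rho A_\rho$ is strictly smaller than $\lambda_1$; consequently $\|(U_\rho A_\rho)^N\|_{op}/|W_{N,i,j}|\to0$ as $N\to\infty$ for all $i,j$.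
   Context: $W_{N,i,j}$ is the set of walks of length $N$ in $G$ from $v_i$ to $v_j$ (sequences $w_0=v_i,\dots,w_N=v_j$ of consecutively adjacent vertices, counted with multiplicity). $\|\cdot\|_{op}$ is the operator norm. *)

theory Defs
  imports "HOL-Analysis.Analysis" "HOL-Algebra.Generated_Groups"
begin

definition simple_graph :: "('n \<Rightarrow> 'n \<Rightarrow> bool) \<Rightarrow> bool" where
  "simple_graph E \<longleftrightarrow> (\<forall>u v. E u v \<longleftrightarrow> E v u) \<and> (\<forall>v. \<not> E v v)"

definition walks :: "('n \<Rightarrow> 'n \<Rightarrow> bool) \<Rightarrow> nat \<Rightarrow> 'n \<Rightarrow> 'n \<Rightarrow> 'n list set" where
  "walks E N i j = {ws. length ws = Suc N \<and> ws ! 0 = i \<and> ws ! N = j \<and>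
                        (\<forall>m<N. E (ws ! m) (ws ! Suc m))}"

definition graph_connected :: "('n \<Rightarrow> 'n \<Rightarrow> bool) \<Rightarrow> bool" where
  "graph_connected E \<longleftrightarrow> (\<forall>i j. \<exists>N. walks E N i j \<noteq> {})"

definition adjacency :: "('n::finite \<Rightarrow> 'n \<Rightarrow> bool) \<Rightarrow> complex^'n^'n" where
  "adjacency E = (\<chi> i j. if E i j then 1 else 0)"

definition is_eigenvalue :: "complex^'m^'m \<Rightarrow> complex \<Rightarrow> bool" where
  "is_eigenvalue M \<mu> \<longleftrightarrow> (\<exists>v. v \<noteq> 0 \<and> M *v v = \<mu> *s v)"

definition spec_radius :: "complex^'m^'m \<Rightarrow> real" where
  "spec_radius M = Max {cmod \<mu> | \<mu>. is_eigenvalue M \<mu>}"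

fun mat_pow :: "'a::comm_ring_1^'m^'m \<Rightarrow> nat \<Rightarrow> 'a^'m^'m" where
  "mat_pow M 0 = mat 1"
| "mat_pow M (Suc N) = M ** mat_pow M N"

definition op_norm :: "complex^'m^'m \<Rightarrow> real" where
  "op_norm M = onorm (\<lambda>x. M *v x)"

definition conj_transpose :: "complex^'k^'k \<Rightarrow> complex^'k^'k" where
  "conj_transpose M = (\<chi> i j. cnj (M $ j $ i))"

definition unitary_mat :: "complex^'k^'k \<Rightarrow> bool" where
  "unitary_mat M \<longleftrightarrow> M ** conj_transpose M = mat 1 \<and> conj_transpose M ** M = mat 1"

definition csubspace_vec :: "(complex^'k) set \<Rightarrow> bool" where
  "csubspace_vec W \<longleftrightarrow> 0 \<in> W \<and> (\<forall>x\<in>W. \<forall>y\<in>W. x + y \<in> W) \<and> (\<forall>c. \<forall>x\<in>W. c *s x \<in> W)"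

definition unitary_rep :: "('g, 'b) monoid_scheme \<Rightarrow> ('g \<Rightarrow> complex^'k^'k) \<Rightarrow> bool" where
  "unitary_rep G \<rho> \<longleftrightarrow> (\<forall>g\<in>carrier G. unitary_mat (\<rho> g)) \<and>
     (\<forall>g\<in>carrier G. \<forall>h\<in>carrier G. \<rho> (g \<otimes>\<^bsub>G\<^esub> h) = \<rho> g ** \<rho> h)"

definition irreducible_rep :: "('g, 'b) monoid_scheme \<Rightarrow> ('g \<Rightarrow> complex^'k^'k) \<Rightarrow> bool" where
  "irreducible_rep G \<rho> \<longleftrightarrow> unitary_rep G \<rho> \<and>
     (\<forall>W. csubspace_vec W \<and> (\<forall>g\<in>carrier G. \<forall>w\<in>W. \<rho> g *v w \<in> W)
          \<longrightarrow> W = {0} \<or> W = UNIV)"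

definition trivial_rep :: "('g, 'b) monoid_scheme \<Rightarrow> ('g \<Rightarrow> complex^'k^'k) \<Rightarrow> bool" where
  "trivial_rep G \<rho> \<longleftrightarrow> (\<forall>g\<in>carrier G. \<rho> g = mat 1)"

text \<open>U_rho A_rho with U_rho = diag(rho(t_1),...,rho(t_n)), A_rho = A(G) \<otimes> I_k,
  indexed by pairs (vertex, representation coordinate).\<close>

definition twisted_adj ::
  "('n::finite \<Rightarrow> 'n \<Rightarrow> bool) \<Rightarrow> ('n \<Rightarrow> complex^'k^'k) \<Rightarrow> complex^('n \<times> 'k)^('n \<times> 'k)" where
  "twisted_adj E R = (\<chi> p q. R (fst p) $ snd p $ snd q * adjacency E $ fst p $ fst q)"

end

theory Submission
  imports Defs "Jordan_Normal_Form.Spectral_Radius"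
begin

no_notation Matrix.vec_index (infixl "$" 100)
no_notation Matrix.scalar_prod (infix "\<bullet>" 70)

lemma sym_inner:
  fixes B :: "real^'n^'n"
  assumes "transpose B = B"
  shows "w \<bullet> (B *v v) = (B *v w) \<bullet> v"
  by (metis assms dot_lmul_matrix vector_transpose_matrix)

lemma psd_zero:
  fixes B :: "real^'n^'n"
  assumes sym: "transpose B = B"
   and Vadd: "\<And>a b. a\<in>V \<Longrightarrow> b\<in>V \<Longrightarrow> a + b \<in> V"
   and Vs: "\<And>c a. a\<in>V \<Longrightarrow> c *\<^sub>R a \<in> V"
   and inv: "\<And>a. a\<in>V \<Longrightarrow> B *v a \<in> V"
   and le: "\<And>w. w\<in>V \<Longrightarrow> w \<bullet> (B *v w) \<le> m * (w \<bullet> w)"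
   and v: "v\<in>V" and eq: "v \<bullet> (B *v v) = m * (v \<bullet> v)"
  shows "B *v v = m *\<^sub>R v"
proof -
  define d where "d = m *\<^sub>R v - B *v v"
  have dV: "d \<in> V" unfolding d_def using Vadd[OF Vs[OF v, of m] Vs[OF inv[OF v], of "-1"]] by simp
  define q where "q = m * (d \<bullet> d) - d \<bullet> (B *v d)"
  have q0: "q \<ge> 0" using le[OF dV] unfolding q_def by simp
  have sd: "d \<bullet> (B *v v) = v \<bullet> (B *v d)" using sym_inner[OF sym, of d v] by (simp add: inner_commute)
  have dd: "d \<bullet> d = m * (d \<bullet> v) - d \<bullet> (B *v v)" unfolding d_def
    by (simp add: inner_diff_right inner_diff_left)
  have key: "0 \<le> 2*t*(d\<bullet>d) + t^2 * q" for t
  proof -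
    have "(v + t *\<^sub>R d) \<in> V" using Vadd[OF v Vs[OF dV]] .
    from le[OF this] have "(v + t *\<^sub>R d) \<bullet> (B *v (v + t *\<^sub>R d)) \<le> m * ((v + t *\<^sub>R d) \<bullet> (v + t *\<^sub>R d))" .
    moreover have "B *v (v + t *\<^sub>R d) = B *v v + t *\<^sub>R (B *v d)"
      by (simp add: matrix_vector_right_distrib matrix_vector_mult_scaleR)
    ultimately have "(v + t *\<^sub>R d) \<bullet> (B *v v + t *\<^sub>R (B *v d)) \<le> m * ((v + t *\<^sub>R d) \<bullet> (v + t *\<^sub>R d))" by simp
    moreover have "(v + t *\<^sub>R d) \<bullet> (B *v v + t *\<^sub>R (B *v d)) = v \<bullet> (B *v v) + t * (v \<bullet> (B *v d)) + t * (d \<bullet> (B *v v)) + t*t*(d \<bullet> (B *v d))"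
      by (simp add: inner_add_left inner_add_right algebra_simps)
    moreover have "(v + t *\<^sub>R d) \<bullet> (v + t *\<^sub>R d) = v \<bullet> v + 2 * t * (d \<bullet> v) + t * t * (d \<bullet> d)"
      by (simp add: inner_add_left inner_add_right inner_commute algebra_simps)
    ultimately have "v \<bullet> (B *v v) + t * (v \<bullet> (B *v d)) + t * (d \<bullet> (B *v v)) + t*t*(d \<bullet> (B *v d))
        \<le> m * (v \<bullet> v + 2 * t * (d \<bullet> v) + t * t * (d \<bullet> d))" by simp
    hence "t*t*(d \<bullet> (B *v d)) + 2 * t * (d \<bullet> (B *v v)) \<le> m * (2 * t * (d \<bullet> v)) + m * (t * t * (d \<bullet> d))"
      using eq sd by (simp add: algebra_simps)
    moreover have "m * (2 * t * (d \<bullet> v)) = 2 * t * (d \<bullet> d) + 2 * t * (d \<bullet> (B *v v))"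
    proof -
      have "m * (2 * t * (d \<bullet> v)) = 2 * t * (m * (d \<bullet> v))" by simp
      also have "\<dots> = 2 * t * (d \<bullet> d) + 2 * t * (d \<bullet> (B *v v))" by (subst dd) (simp add: algebra_simps)
      finally show ?thesis .
    qed
    ultimately show ?thesis unfolding q_def by (simp add: power2_eq_square algebra_simps)
  qed
  have "d \<bullet> d = 0"
  proof (rule ccontr)
    assume "d \<bullet> d \<noteq> 0"
    hence a: "d \<bullet> d > 0" by (simp add: order_less_le)
    have h: "2 * (d\<bullet>d) \<le> s * q" if s: "s > 0" for s
    proof -
      have "0 \<le> 2*(-s)*(d\<bullet>d) + (-s)^2 * q" by (rule key)
      hence "s * (2 * (d\<bullet>d)) \<le> s * (s * q)" by (simp add: power2_eq_square algebra_simps)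
      thus ?thesis using s by simp
    qed
    define s where "s = (d\<bullet>d) / (q + 1)"
    have sp: "s > 0" unfolding s_def using a q0 by simp
    have "s * q \<le> d\<bullet>d" unfolding s_def using a q0 by (simp add: field_simps)
    with h[OF sp] a show False by simp
  qed
  hence "d = 0" by simp
  thus ?thesis unfolding d_def by simp
qed

lemma rayleigh_max:
  fixes B :: "real^'n^'n"
  assumes sym: "transpose B = B" and cl: "closed V"
   and Vadd: "\<And>a b. a\<in>V \<Longrightarrow> b\<in>V \<Longrightarrow> a + b \<in> V"
   and Vs: "\<And>c a. a\<in>V \<Longrightarrow> c *\<^sub>R a \<in> V"
   and inv: "\<And>a. a\<in>V \<Longrightarrow> B *v a \<in> V"
   and v0: "v0 \<in> V" "v0 \<noteq> 0"
  shows "\<exists>v m. v \<in> V \<and> v \<noteq> 0 \<and> B *v v = m *\<^sub>R v \<and> (\<forall>w\<in>V. w \<bullet> (B *v w) \<le> m * (w \<bullet> w))"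
proof -
  let ?S = "V \<inter> sphere 0 1"
  let ?f = "\<lambda>w. w \<bullet> (B *v w)"
  have cpt: "compact ?S" by (intro closed_Int_compact cl compact_sphere)
  have "(1 / norm v0) *\<^sub>R v0 \<in> ?S" using v0 Vs by auto
  hence ne: "?S \<noteq> {}" by blast
  have cont: "continuous_on ?S ?f" by (intro continuous_intros)
  obtain v where vS: "v \<in> ?S" and vmax: "\<And>w. w \<in> ?S \<Longrightarrow> ?f w \<le> ?f v"
    using continuous_attains_sup[OF cpt ne cont] by blast
  define m where "m = ?f v"
  have vv: "v \<bullet> v = 1" using vS by (simp add: dot_square_norm)
  have le: "w \<bullet> (B *v w) \<le> m * (w \<bullet> w)" if w: "w \<in> V" for w
  proof (cases "w = 0")
    case True thus ?thesis by simp
  next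
    case False
    define c where "c = 1 / norm w"
    have "c *\<^sub>R w \<in> ?S" using w Vs False unfolding c_def by auto
    from vmax[OF this] have "c * c * (w \<bullet> (B *v w)) \<le> m" unfolding m_def
      by (simp add: matrix_vector_mult_scaleR)
    moreover have "c * c = 1 / (w \<bullet> w)" unfolding c_def using False
      by (simp add: dot_square_norm power2_eq_square)
    moreover have "w \<bullet> w > 0" using False by simp
    ultimately show ?thesis by (simp add: field_simps)
  qed
  have "B *v v = m *\<^sub>R v"
    by (rule psd_zero[OF sym Vadd Vs inv le]) (use vS vv m_def in auto)
  moreover have "v \<noteq> 0" using vS by auto
  ultimately show ?thesis using vS le by blast
qed



definition Ar :: "('n::finite \<Rightarrow> 'n \<Rightarrow> bool) \<Rightarrow> real^'n^'n" where
  "Ar E = (\<chi> i j. if E i j then 1 else 0)"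

lemma walks_finite: "finite (walks (E :: 'n::finite \<Rightarrow> 'n \<Rightarrow> bool) N i j)"
proof -
  have "walks E N i j \<subseteq> {xs. set xs \<subseteq> UNIV \<and> length xs = Suc N}" unfolding walks_def by auto
  thus ?thesis using finite_lists_length_eq[of "UNIV :: 'n set"] finite_subset by auto
qed

lemma walks_0: "walks E 0 i j = (if i = j then {[i]} else {})"
proof -
  have "ws \<in> walks E 0 i j \<longleftrightarrow> i = j \<and> ws = [i]" for ws
  proof
    assume "ws \<in> walks E 0 i j"
    hence l: "length ws = 1" "ws ! 0 = i" "ws ! 0 = j" unfolding walks_def by auto
    then obtain a where "ws = [a]" by (metis One_nat_def length_0_conv length_Suc_conv)
    thus "i = j \<and> ws = [i]" using l by auto
  next
    assume "i = j \<and> ws = [i]" thus "ws \<in> walks E 0 i j" unfolding walks_def by auto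
  qed
  thus ?thesis by auto
qed

lemma walks_Suc: "walks E (Suc N) i j = (\<Union>k\<in>{k. E i k}. (Cons i) ` walks E N k j)"
proof (intro equalityI subsetI)
  fix ws assume w: "ws \<in> walks E (Suc N) i j"
  hence l: "length ws = Suc (Suc N)" "ws ! 0 = i" "ws ! Suc N = j"
    and e: "\<And>m. m < Suc N \<Longrightarrow> E (ws ! m) (ws ! Suc m)" unfolding walks_def by auto
  then obtain a ws' where ws: "ws = a # ws'" by (cases ws) auto
  have a: "a = i" using l ws by auto
  have "E i (ws' ! 0)" using e[of 0] ws a by auto
  moreover have "ws' \<in> walks E N (ws' ! 0) j"
  proof -
    have "E (ws' ! m) (ws' ! Suc m)" if "m < N" for m using e[of "Suc m"] that ws by simp
    thus ?thesis unfolding walks_def using l ws by auto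
  qed
  ultimately show "ws \<in> (\<Union>k\<in>{k. E i k}. (Cons i) ` walks E N k j)" using ws a by auto
next
  fix ws assume "ws \<in> (\<Union>k\<in>{k. E i k}. (Cons i) ` walks E N k j)"
  then obtain k ws' where k: "E i k" and ws': "ws' \<in> walks E N k j" and ws: "ws = i # ws'" by auto
  from ws' have l: "length ws' = Suc N" "ws' ! 0 = k" "ws' ! N = j"
    and e: "\<And>m. m < N \<Longrightarrow> E (ws' ! m) (ws' ! Suc m)" unfolding walks_def by auto
  have "E (ws ! m) (ws ! Suc m)" if "m < Suc N" for m
  proof (cases m)
    case 0 thus ?thesis using ws k l by simp
  next
    case (Suc m') thus ?thesis using ws e that by simp
  qed
  thus "ws \<in> walks E (Suc N) i j" unfolding walks_def using ws l by auto
qed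

lemma sum_ind_mult: fixes f :: "'b::finite \<Rightarrow> 'a::comm_ring_1"
  shows "(\<Sum>k\<in>UNIV. (if P k then 1 else 0) * f k) = (\<Sum>k\<in>{k. P k}. f k)"
proof -
  have "(\<Sum>k\<in>UNIV. (if P k then 1 else 0) * f k) = (\<Sum>k\<in>UNIV. if P k then f k else 0)"
    by (intro sum.cong) auto
  also have "\<dots> = (\<Sum>k\<in>{k. P k}. f k)" using sum.inter_filter[of UNIV f P] by simp
  finally show ?thesis .
qed

lemma mat_pow_Ar_Suc: "mat_pow (Ar (E :: 'n::finite \<Rightarrow> 'n \<Rightarrow> bool)) (Suc N) $ i $ j = (\<Sum>k\<in>{k. E i k}. mat_pow (Ar E) N $ k $ j)"
  by (simp add: matrix_matrix_mult_def Ar_def sum_ind_mult)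

lemma card_walks: "real (card (walks (E :: 'n::finite \<Rightarrow> 'n \<Rightarrow> bool) N i j)) = mat_pow (Ar E) N $ i $ j"
proof (induction N arbitrary: i)
  case 0 thus ?case by (simp add: walks_0 Finite_Cartesian_Product.mat_def)
next
  case (Suc N)
  have "card (walks E (Suc N) i j) = (\<Sum>k\<in>{k. E i k}. card ((Cons i) ` walks E N k j))"
    unfolding walks_Suc
    apply (rule card_UN_disjoint)
      apply simp
     apply (simp add: walks_finite)
    apply (auto simp: walks_def)
    done
  also have "\<dots> = (\<Sum>k\<in>{k. E i k}. card (walks E N k j))"
    by (intro sum.cong refl card_image) auto
  finally have "real (card (walks E (Suc N) i j)) = (\<Sum>k\<in>{k. E i k}. real (card (walks E N k j)))" by simp
  also have "\<dots> = (\<Sum>k\<in>{k. E i k}. mat_pow (Ar E) N $ k $ j)" using Suc.IH by simp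
  also have "\<dots> = mat_pow (Ar E) (Suc N) $ i $ j" by (rule mat_pow_Ar_Suc[symmetric])
  finally show ?case .
qed

lemma conn_prop:
  assumes "graph_connected E" "P i0" "\<And>a b. E a b \<Longrightarrow> P a \<Longrightarrow> P b"
  shows "P j"
proof -
  obtain N where "walks E N i0 j \<noteq> {}" using assms(1) unfolding graph_connected_def by blast
  then obtain ws where l: "ws ! 0 = i0" "ws ! N = j" and e: "\<And>m. m < N \<Longrightarrow> E (ws ! m) (ws ! Suc m)"
    unfolding walks_def by auto
  have "m \<le> N \<longrightarrow> P (ws ! m)" for m
  proof (induction m)
    case 0 thus ?case using l assms(2) by simp
  next
    case (Suc m) thus ?case using assms(3) e by (meson Suc_leD Suc_le_lessD)
  qed
  thus ?thesis using l by auto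
qed



lemmas cvec_eq_iff = Finite_Cartesian_Product.vec_eq_iff

locale pfg =
  fixes E :: "'n::finite \<Rightarrow> 'n \<Rightarrow> bool" and lambda1 :: real
  assumes graph: "simple_graph E" and conn: "graph_connected E"
    and pf_eig: "is_eigenvalue (adjacency E) (complex_of_real lambda1)" and pos: "lambda1 > 0"
    and pf_dom: "\<And>\<mu>. is_eigenvalue (adjacency E) \<mu> \<Longrightarrow> \<mu> \<noteq> complex_of_real lambda1 \<Longrightarrow> cmod \<mu> < lambda1"
begin

lemma symE: "E a b \<longleftrightarrow> E b a" using graph unfolding simple_graph_def by blast

lemma Ar_sym: "transpose (Ar E) = Ar E"
  unfolding Ar_def Finite_Cartesian_Product.transpose_def by (simp add: cvec_eq_iff) (metis symE)

lemma Ar_apply: "(Ar E *v y) $ i = (\<Sum>j\<in>{j. E i j}. y $ j)"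
  by (simp add: Ar_def matrix_vector_mult_def sum_ind_mult)

lemma adj_apply: "(adjacency E *v p) $ i = (\<Sum>j\<in>{j. E i j}. p $ j)"
  by (simp add: adjacency_def matrix_vector_mult_def sum_ind_mult)

lemma real_eig: assumes "Ar E *v v = m *\<^sub>R v" "v \<noteq> 0"
  shows "is_eigenvalue (adjacency E) (of_real m)"
proof -
  define vc where "vc = (\<chi> i. complex_of_real (v $ i))"
  have "adjacency E *v vc = of_real m *s vc"
  proof (subst cvec_eq_iff, intro allI)
    fix i
    have "(adjacency E *v vc) $ i = of_real ((Ar E *v v) $ i)"
      unfolding adj_apply Ar_apply vc_def by simp
    also have "\<dots> = of_real m * vc $ i" using assms(1) unfolding vc_def by simp
    finally show "(adjacency E *v vc) $ i = (of_real m *s vc) $ i" by simp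
  qed
  moreover have "vc \<noteq> 0" using assms(2) unfolding vc_def by (simp add: cvec_eq_iff)
  ultimately show ?thesis unfolding is_eigenvalue_def by blast
qed

lemma real_eig_le: assumes "Ar E *v v = m *\<^sub>R v" "v \<noteq> 0"
  shows "m = lambda1 \<or> \<bar>m\<bar> < lambda1"
  using pf_dom[OF real_eig[OF assms]] by auto

lemma rayleigh_A: "w \<bullet> (Ar E *v w) \<le> lambda1 * (w \<bullet> w)"
proof -
  obtain v m where v: "v \<noteq> 0" "Ar E *v v = m *\<^sub>R v" and le: "\<forall>w\<in>UNIV. w \<bullet> (Ar E *v w) \<le> m * (w \<bullet> w)"
    using rayleigh_max[OF Ar_sym, of UNIV "axis undefined 1"] by (auto simp: axis_eq_0_iff)
  have "m \<le> lambda1" using real_eig_le[OF v(2,1)] by auto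
  hence "m * (w \<bullet> w) \<le> lambda1 * (w \<bullet> w)" by (intro mult_right_mono) auto
  thus ?thesis using le by (meson UNIV_I order_trans)
qed

lemma Kp: assumes nn: "\<forall>i. y $ i \<ge> 0" and nz: "y \<noteq> 0" and ge: "\<forall>i. s * y $ i \<le> (Ar E *v y) $ i"
  shows "s \<le> lambda1 \<and> (s = lambda1 \<longrightarrow> Ar E *v y = lambda1 *\<^sub>R y)"
proof -
  have "s * (y \<bullet> y) = (\<Sum>i\<in>UNIV. y $ i * (s * y $ i))"
    by (simp add: inner_vec_def sum_distrib_left algebra_simps)
  also have "\<dots> \<le> (\<Sum>i\<in>UNIV. y $ i * (Ar E *v y) $ i)"
    by (intro sum_mono mult_left_mono) (use nn ge in auto)
  also have "\<dots> = y \<bullet> (Ar E *v y)" by (simp add: inner_vec_def)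
  finally have a: "s * (y \<bullet> y) \<le> y \<bullet> (Ar E *v y)" .
  have yy: "y \<bullet> y > 0" using nz by simp
  have b: "y \<bullet> (Ar E *v y) \<le> lambda1 * (y \<bullet> y)" by (rule rayleigh_A)
  have "s \<le> lambda1" using a b yy by (meson mult_right_le_imp_le order_trans)
  moreover have "Ar E *v y = lambda1 *\<^sub>R y" if "s = lambda1"
    by (rule psd_zero[OF Ar_sym, of UNIV]) (use a b that rayleigh_A in auto)
  ultimately show ?thesis by blast
qed

lemma POS: assumes nn: "\<forall>i. y $ i \<ge> 0" and nz: "y \<noteq> 0" and ev: "Ar E *v y = lambda1 *\<^sub>R y"
  shows "y $ i > 0"
proof -
  obtain i0 where i0: "y $ i0 \<noteq> 0" using nz by (auto simp: cvec_eq_iff)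
  have "y $ i \<noteq> 0"
  proof (rule conn_prop[OF conn, of "\<lambda>a. y $ a \<noteq> 0", OF i0])
    fix a b assume ab: "E a b" and a: "y $ a \<noteq> 0"
    show "y $ b \<noteq> 0"
    proof
      assume b: "y $ b = 0"
      have "(Ar E *v y) $ b = 0" using ev b by simp
      hence "(\<Sum>j\<in>{j. E b j}. y $ j) = 0" by (simp only: Ar_apply)
      hence "\<forall>j\<in>{j. E b j}. y $ j = 0" using nn by (subst (asm) sum_nonneg_eq_0_iff) auto
      moreover have "E b a" using ab symE by blast
      ultimately show False using a by blast
    qed
  qed
  thus ?thesis using nn by (simp add: order_less_le)
qed

lemma pf_vec: "\<exists>y. (\<forall>i. y $ i > 0) \<and> Ar E *v y = lambda1 *\<^sub>R y"
proof -
  obtain p where p: "p \<noteq> 0" "adjacency E *v p = complex_of_real lambda1 *s p"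
    using pf_eig unfolding is_eigenvalue_def by blast
  define q where "q = (\<chi> i. cmod (p $ i))"
  have nn: "\<forall>i. q $ i \<ge> 0" unfolding q_def by simp
  have nz: "q \<noteq> 0" using p(1) unfolding q_def by (auto simp: cvec_eq_iff)
  have ge: "\<forall>i. lambda1 * q $ i \<le> (Ar E *v q) $ i"
  proof
    fix i
    have "lambda1 * q $ i = cmod ((adjacency E *v p) $ i)" using p(2) pos unfolding q_def
      by (simp add: norm_mult)
    also have "\<dots> = cmod (\<Sum>j\<in>{j. E i j}. p $ j)" by (simp add: adj_apply)
    also have "\<dots> \<le> (\<Sum>j\<in>{j. E i j}. cmod (p $ j))" by (rule norm_sum)
    also have "\<dots> = (Ar E *v q) $ i" by (simp add: Ar_apply q_def)
    finally show "lambda1 * q $ i \<le> (Ar E *v q) $ i" .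
  qed
  have ev: "Ar E *v q = lambda1 *\<^sub>R q" using Kp[OF nn nz ge] by simp
  show ?thesis using POS[OF nn nz ev] ev by blast
qed

lemma simple: assumes yp: "\<forall>i. y $ i > 0" and ev: "Ar E *v u = lambda1 *\<^sub>R u" and orth: "u \<bullet> y = 0"
  shows "u = 0"
proof (rule ccontr)
  assume unz: "u \<noteq> 0"
  define up where "up = (\<chi> i. max (u $ i) 0)"
  show False
  proof (cases "up = 0")
    case True
    hence le: "\<forall>i. u $ i \<le> 0" unfolding up_def cvec_eq_iff by (metis max.cobounded1 vec_lambda_beta zero_index)
    have "(\<Sum>i\<in>UNIV. - (u $ i * y $ i)) = 0" using orth by (simp add: inner_vec_def sum_negf)
    hence "\<forall>i\<in>UNIV. - (u $ i * y $ i) = 0"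
      using le yp by (subst (asm) sum_nonneg_eq_0_iff) (auto simp: mult_nonpos_nonneg less_imp_le)
    hence "\<forall>i. u $ i = 0" using yp by (metis UNIV_I less_irrefl mult_eq_0_iff neg_equal_0_iff_equal)
    thus False using unz by (simp add: cvec_eq_iff)
  next
    case False
    have nn: "\<forall>i. up $ i \<ge> 0" unfolding up_def by simp
    have ge: "\<forall>i. lambda1 * up $ i \<le> (Ar E *v up) $ i"
    proof
      fix i
      have s0: "0 \<le> (Ar E *v up) $ i" unfolding Ar_apply using nn by (simp add: sum_nonneg)
      show "lambda1 * up $ i \<le> (Ar E *v up) $ i"
      proof (cases "u $ i > 0")
        case True
        have "lambda1 * up $ i = (Ar E *v u) $ i" using ev True unfolding up_def by simp
        also have "\<dots> \<le> (Ar E *v up) $ i" unfolding Ar_apply up_def by (intro sum_mono) auto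
        finally show ?thesis .
      next
        case False thus ?thesis using s0 unfolding up_def by simp
      qed
    qed
    have ev2: "Ar E *v up = lambda1 *\<^sub>R up" using Kp[OF nn False ge] by simp
    have "\<forall>i. u $ i > 0"
    proof
      fix i have "up $ i > 0" by (rule POS[OF nn False ev2])
      thus "u $ i > 0" unfolding up_def by (simp add: max_def split: if_splits)
    qed
    hence "u \<bullet> y > 0" using yp unfolding inner_vec_def by (intro sum_pos) auto
    thus False using orth by simp
  qed
qed

end


context pfg begin

lemma gap: assumes yp: "\<forall>i. y $ i > 0" and ev: "Ar E *v y = lambda1 *\<^sub>R y"
  shows "\<exists>r. 0 \<le> r \<and> r < lambda1 \<and> (\<forall>w. w \<bullet> y = 0 \<longrightarrow> norm (Ar E *v w) \<le> r * norm w)"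
proof (cases "\<forall>w. w \<bullet> y = 0 \<longrightarrow> w = 0")
  case True thus ?thesis using pos by (intro exI[of _ 0]) auto
next
  case False
  then obtain v0 where v0: "v0 \<bullet> y = 0" "v0 \<noteq> 0" by blast
  let ?V = "{w. w \<bullet> y = 0}"
  let ?B = "Ar E ** Ar E"
  have Bsym: "transpose ?B = ?B" by (simp add: matrix_transpose_mul Ar_sym)
  have cl: "closed ?V"
  proof -
    have "?V = {w. y \<bullet> w = 0}" by (simp add: inner_commute)
    thus ?thesis using closed_hyperplane by simp
  qed
  have invA: "(Ar E *v w) \<bullet> y = 0" if "w \<bullet> y = 0" for w
  proof -
    have "(Ar E *v w) \<bullet> y = w \<bullet> (Ar E *v y)" using sym_inner[OF Ar_sym, of w y] by simp
    also have "\<dots> = 0" using that ev by simp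
    finally show ?thesis .
  qed
  have BA: "?B *v w = Ar E *v (Ar E *v w)" for w by (simp add: matrix_vector_mul_assoc)
  have normA: "(norm (Ar E *v w))^2 = w \<bullet> (?B *v w)" for w
    using sym_inner[OF Ar_sym, of w "Ar E *v w"] by (simp add: BA dot_square_norm)
  have r1: "a + b \<in> ?V" if "a \<in> ?V" "b \<in> ?V" for a b using that by (simp add: inner_add_left)
  have r2: "c *\<^sub>R a \<in> ?V" if "a \<in> ?V" for a c using that by simp
  have r3: "?B *v a \<in> ?V" if "a \<in> ?V" for a using that invA unfolding BA by simp
  have v0V: "v0 \<in> ?V" using v0 by simp
  obtain v m where v: "v \<in> ?V" "v \<noteq> 0" "?B *v v = m *\<^sub>R v" and le: "\<forall>w\<in>?V. w \<bullet> (?B *v w) \<le> m * (w \<bullet> w)"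
    using rayleigh_max[OF Bsym cl r1 r2 r3 v0V v0(2)] by blast
  have m0: "m \<ge> 0"
  proof -
    have "0 \<le> (norm (Ar E *v v))^2" by simp
    also have "\<dots> = m * (v \<bullet> v)" using normA[of v] v(3) by simp
    finally have h1: "0 \<le> m * (v \<bullet> v)" .
    have h2: "v \<bullet> v > 0" using v(2) by simp
    show ?thesis
    proof (rule ccontr)
      assume "\<not> m \<ge> 0"
      hence "m < 0" by simp
      hence "m * (v \<bullet> v) < 0" using h2 by (rule mult_neg_pos)
      thus False using h1 by simp
    qed
  qed
  define r where "r = sqrt m"
  have r0: "r \<ge> 0" unfolding r_def using m0 by (rule real_sqrt_ge_zero)
  have rr: "r * r = m" unfolding r_def using m0 by simp
  have bound: "norm (Ar E *v w) \<le> r * norm w" if "w \<bullet> y = 0" for w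
  proof -
    have "(norm (Ar E *v w))^2 \<le> m * (w \<bullet> w)" using normA[of w] le that by simp
    also have "\<dots> = (r * norm w)^2"
    proof -
      have "(r * norm w)^2 = (r * r) * (norm w)^2" by (simp add: power2_eq_square)
      thus ?thesis using rr by (simp add: dot_square_norm)
    qed
    finally have "(norm (Ar E *v w))^2 \<le> (r * norm w)^2" .
    moreover have "0 \<le> r * norm w" using r0 by simp
    ultimately show ?thesis by (rule power2_le_imp_le)
  qed
  have "r < lambda1"
  proof -
    define u where "u = Ar E *v v + r *\<^sub>R v"
    have Au: "Ar E *v u = r *\<^sub>R u"
    proof -
      have "Ar E *v u = ?B *v v + r *\<^sub>R (Ar E *v v)"
        unfolding u_def by (simp add: matrix_vector_right_distrib matrix_vector_mult_scaleR BA)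
      also have "\<dots> = (r * r) *\<^sub>R v + r *\<^sub>R (Ar E *v v)" using v(3) rr by simp
      also have "\<dots> = r *\<^sub>R u" unfolding u_def by (simp add: algebra_simps)
      finally show ?thesis .
    qed
    show ?thesis
    proof (cases "u = 0")
      case True
      hence "Ar E *v v = (- r) *\<^sub>R v" unfolding u_def by (simp add: add_eq_0_iff)
      from real_eig_le[OF this v(2)] show ?thesis using r0 pos by auto
    next
      case False
      have uV: "u \<bullet> y = 0" unfolding u_def using invA v(1) by (simp add: inner_add_left)
      from real_eig_le[OF Au False] show ?thesis
      proof
        assume "r = lambda1"
        hence "u = 0" using simple[OF yp _ uV] Au by simp
        thus ?thesis using False by simp
      qed (use r0 in simp)
    qed
  qed
  thus ?thesis using r0 bound by blast
qed

lemma mat_pow_vec_Suc: "mat_pow M (Suc N) *v x = M *v (mat_pow M N *v x)"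
  by (simp add: matrix_vector_mul_assoc)

lemma walks_lower: "\<exists>d>0. eventually (\<lambda>N. d * lambda1^N \<le> real (card (walks E N i j))) sequentially"
proof -
  obtain y where yp: "\<forall>i. y $ i > 0" and ev: "Ar E *v y = lambda1 *\<^sub>R y" using pf_vec by blast
  obtain r where r0: "0 \<le> r" and rl: "r < lambda1" and bd: "\<And>w. w \<bullet> y = 0 \<Longrightarrow> norm (Ar E *v w) \<le> r * norm w"
    using gap[OF yp ev] by blast
  have "y \<noteq> 0" using yp by (metis less_irrefl zero_index)
  hence yy: "y \<bullet> y > 0" by simp
  define \<alpha> where "\<alpha> = y $ j / (y \<bullet> y)"
  define w where "w = axis j 1 - \<alpha> *\<^sub>R y"
  have wy: "w \<bullet> y = 0" unfolding w_def \<alpha>_def using yy by (simp add: inner_diff_left inner_axis')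
  have powy: "mat_pow (Ar E) N *v y = lambda1^N *\<^sub>R y" for N
  proof (induction N)
    case 0 thus ?case by simp
  next
    case (Suc N)
    have "mat_pow (Ar E) (Suc N) *v y = Ar E *v (mat_pow (Ar E) N *v y)" by (rule mat_pow_vec_Suc)
    also have "\<dots> = lambda1^Suc N *\<^sub>R y" using Suc ev by (simp add: matrix_vector_mult_scaleR)
    finally show ?case .
  qed
  have poww: "(mat_pow (Ar E) N *v w) \<bullet> y = 0 \<and> norm (mat_pow (Ar E) N *v w) \<le> r^N * norm w" for N
  proof (induction N)
    case 0 thus ?case using wy by simp
  next
    case (Suc N)
    let ?x = "mat_pow (Ar E) N *v w"
    have "(Ar E *v ?x) \<bullet> y = ?x \<bullet> (Ar E *v y)" using sym_inner[OF Ar_sym, of ?x y] by simp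
    also have "\<dots> = 0" using Suc ev by simp
    finally have o: "(Ar E *v ?x) \<bullet> y = 0" .
    have "norm (Ar E *v ?x) \<le> r * norm ?x" using bd Suc by blast
    also have "\<dots> \<le> r * (r^N * norm w)" using Suc r0 by (intro mult_left_mono) auto
    finally have "norm (Ar E *v ?x) \<le> r^Suc N * norm w" by simp
    moreover have "mat_pow (Ar E) (Suc N) *v w = Ar E *v ?x" by (rule mat_pow_vec_Suc)
    ultimately show ?case using o by simp
  qed
  define c where "c = \<alpha> * y $ i"
  have c0: "c > 0" unfolding c_def \<alpha>_def using yp yy by simp
  have entry: "real (card (walks E N i j)) \<ge> c * lambda1^N - r^N * norm w" for N
  proof -
    have "real (card (walks E N i j)) = (mat_pow (Ar E) N *v axis j 1) $ i"
      by (simp add: card_walks matrix_vector_mult_basis column_def)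
    also have "axis j 1 = \<alpha> *\<^sub>R y + w" unfolding w_def by simp
    finally have "real (card (walks E N i j)) = c * lambda1^N + (mat_pow (Ar E) N *v w) $ i"
      unfolding c_def by (simp add: matrix_vector_right_distrib matrix_vector_mult_scaleR powy)
    moreover have "\<bar>(mat_pow (Ar E) N *v w) $ i\<bar> \<le> r^N * norm w"
      using component_le_norm_cart poww order_trans by blast
    ultimately show ?thesis by linarith
  qed
  have "((\<lambda>N. (r / lambda1)^N * norm w) \<longlongrightarrow> 0 * norm w) sequentially"
    by (intro tendsto_mult tendsto_const LIMSEQ_power_zero) (use r0 rl pos in simp)
  hence "eventually (\<lambda>N. (r / lambda1)^N * norm w < c / 2) sequentially"
    using c0 by (intro order_tendstoD(2)) auto
  hence "eventually (\<lambda>N. c / 2 * lambda1^N \<le> real (card (walks E N i j))) sequentially"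
  proof (rule eventually_mono)
    fix N assume a: "(r / lambda1)^N * norm w < c / 2"
    have "r^N * norm w = lambda1^N * ((r / lambda1)^N * norm w)" using pos
      by (simp add: power_divide)
    also have "\<dots> \<le> lambda1^N * (c/2)" using a pos by (intro mult_left_mono) auto
    finally show "c / 2 * lambda1^N \<le> real (card (walks E N i j))" using entry[of N] by (simp add: algebra_simps)
  qed
  thus ?thesis using c0 by (intro exI[of _ "c/2"]) auto
qed

end


lemma norm_sq_vec: "complex_of_real ((norm (v::complex^'k))^2) = (\<Sum>a\<in>UNIV. v$a * cnj (v$a))"
proof -
  have "(norm v)^2 = (\<Sum>a\<in>UNIV. (cmod (v$a))^2)" by (simp add: norm_vec_def L2_set_def sum_nonneg)
  hence "complex_of_real ((norm v)^2) = (\<Sum>a\<in>UNIV. complex_of_real ((cmod (v$a))^2))"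
    by (simp only: of_real_sum)
  also have "\<dots> = (\<Sum>a\<in>UNIV. v$a * cnj (v$a))" by (intro sum.cong refl complex_norm_square)
  finally show ?thesis .
qed

lemma sum_swap3: "(\<Sum>a\<in>A. \<Sum>b\<in>B. \<Sum>c\<in>C. F a b c) = (\<Sum>b\<in>B. \<Sum>c\<in>C. \<Sum>a\<in>A. (F a b c :: 'z::comm_monoid_add))"
proof -
  have "(\<Sum>a\<in>A. \<Sum>b\<in>B. \<Sum>c\<in>C. F a b c) = (\<Sum>b\<in>B. \<Sum>a\<in>A. \<Sum>c\<in>C. F a b c)" by (rule sum.swap)
  also have "\<dots> = (\<Sum>b\<in>B. \<Sum>c\<in>C. \<Sum>a\<in>A. F a b c)" by (intro sum.cong refl sum.swap)
  finally show ?thesis .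
qed

lemma unitary_norm: assumes "unitary_mat U" shows "norm (U *v x) = norm (x :: complex^'k)"
proof -
  have ctU: "(\<Sum>a\<in>UNIV. cnj (U$a$c) * U$a$b) = (if c = b then 1 else 0)" for c b
  proof -
    have "(conj_transpose U ** U) $ c $ b = (if c = b then 1 else 0)"
      using assms unfolding unitary_mat_def by (simp add: Finite_Cartesian_Product.mat_def)
    thus ?thesis by (simp add: matrix_matrix_mult_def conj_transpose_def)
  qed
  have "complex_of_real ((norm (U *v x))^2) = (\<Sum>a\<in>UNIV. (\<Sum>b\<in>UNIV. U$a$b * x$b) * cnj (\<Sum>c\<in>UNIV. U$a$c * x$c))"
    unfolding norm_sq_vec by (simp add: matrix_vector_mult_def)
  also have "\<dots> = (\<Sum>a\<in>UNIV. \<Sum>b\<in>UNIV. \<Sum>c\<in>UNIV. U$a$b * x$b * (cnj (U$a$c) * cnj (x$c)))"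
    by (simp add: cnj_sum sum_product)
  also have "\<dots> = (\<Sum>b\<in>UNIV. \<Sum>c\<in>UNIV. \<Sum>a\<in>UNIV. U$a$b * x$b * (cnj (U$a$c) * cnj (x$c)))"
    by (rule sum_swap3)
  also have "\<dots> = (\<Sum>b\<in>UNIV. \<Sum>c\<in>UNIV. x$b * cnj (x$c) * (\<Sum>a\<in>UNIV. cnj (U$a$c) * U$a$b))"
    by (simp add: sum_distrib_left mult_ac)
  also have "\<dots> = (\<Sum>b\<in>UNIV. \<Sum>c\<in>UNIV. x$b * cnj (x$c) * (if c = b then 1 else 0))"
    by (simp only: ctU)
  also have "\<dots> = (\<Sum>b\<in>UNIV. x$b * cnj (x$b))"
    by (simp add: if_distrib cong: if_cong)
  also have "\<dots> = complex_of_real ((norm x)^2)" by (rule norm_sq_vec[symmetric])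
  finally have "(norm (U *v x))^2 = (norm x)^2" using of_real_eq_iff by blast
  thus ?thesis by (simp add: power2_eq_iff_nonneg)
qed

lemma triangle_eq:
  fixes f :: "'i \<Rightarrow> 'a::real_inner"
  assumes fin: "finite J" and eq: "norm (sum f J) = (\<Sum>j\<in>J. norm (f j))" and j: "j \<in> J"
  shows "norm (sum f J) *\<^sub>R f j = norm (f j) *\<^sub>R sum f J"
proof -
  let ?S = "sum f J"
  have "\<forall>j\<in>J. f j \<bullet> ?S \<le> norm (f j) * norm ?S" using norm_cauchy_schwarz by blast
  hence le: "\<forall>j\<in>J. 0 \<le> norm (f j) * norm ?S - f j \<bullet> ?S" by simp
  have "(\<Sum>j\<in>J. norm (f j) * norm ?S - f j \<bullet> ?S) = (\<Sum>j\<in>J. norm (f j)) * norm ?S - ?S \<bullet> ?S"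
    by (simp add: sum_subtractf sum_distrib_right inner_sum_left)
  also have "\<dots> = 0" using eq by (simp add: dot_square_norm power2_eq_square)
  finally have "\<forall>j\<in>J. norm (f j) * norm ?S - f j \<bullet> ?S = 0"
    using le fin by (subst sum_nonneg_eq_0_iff[symmetric]) auto
  hence "f j \<bullet> ?S = norm (f j) * norm ?S" using j by auto
  thus ?thesis using norm_cauchy_schwarz_eq[of "f j" ?S] by simp
qed

lemma norm_smult_vec: "norm (c *s (v :: complex^'k)) = cmod c * norm v"
  unfolding norm_vec_def by (simp add: norm_mult L2_set_right_distrib)

lemma scaleR_smult_vec: "r *\<^sub>R (v :: complex^'k) = complex_of_real r *s v"
proof (subst cvec_eq_iff, intro allI)
  fix i
  have "(r *\<^sub>R v) $ i = r *\<^sub>R (v $ i)" by simp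
  also have "\<dots> = complex_of_real r * v $ i" by (rule scaleR_conv_of_real)
  finally show "(r *\<^sub>R v) $ i = (complex_of_real r *s v) $ i" by simp
qed

lemma twisted_apply:
  "(twisted_adj E R *v x) $ (i,c) = (R i *v (\<Sum>j\<in>{j. E i j}. (\<chi> d. x $ (j,d)))) $ c"
proof -
  have "(twisted_adj E R *v x) $ (i,c) = (\<Sum>p\<in>UNIV. R i $ c $ snd p * adjacency E $ i $ fst p * x $ p)"
    by (simp add: twisted_adj_def matrix_vector_mult_def)
  also have "\<dots> = (\<Sum>j\<in>UNIV. \<Sum>d\<in>UNIV. R i $ c $ d * adjacency E $ i $ j * x $ (j,d))"
    by (simp add: sum.cartesian_product UNIV_Times_UNIV[symmetric] case_prod_unfold del: UNIV_Times_UNIV)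
  also have "\<dots> = (\<Sum>j\<in>UNIV. (if E i j then 1 else 0) * (\<Sum>d\<in>UNIV. R i $ c $ d * x $ (j,d)))"
    by (intro sum.cong refl) (simp add: adjacency_def)
  also have "\<dots> = (\<Sum>j\<in>{j. E i j}. \<Sum>d\<in>UNIV. R i $ c $ d * x $ (j,d))" by (rule sum_ind_mult)
  also have "\<dots> = (\<Sum>d\<in>UNIV. \<Sum>j\<in>{j. E i j}. R i $ c $ d * x $ (j,d))" by (rule sum.swap)
  also have "\<dots> = (R i *v (\<Sum>j\<in>{j. E i j}. (\<chi> d. x $ (j,d)))) $ c"
    by (simp add: matrix_vector_mult_def sum_component sum_distrib_left)
  finally show ?thesis .
qed



context pfg begin

lemma twisted_eig:
  fixes R :: "'n \<Rightarrow> complex^'k^'k"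
  assumes U: "\<And>i. unitary_mat (R i)" and ev: "is_eigenvalue (twisted_adj E R) \<mu>"
  shows "cmod \<mu> \<le> lambda1 \<and> (cmod \<mu> = lambda1 \<longrightarrow> (\<exists>z. z \<noteq> 0 \<and> (\<forall>i. R i *v z = (\<mu> / complex_of_real lambda1) *s z)))"
proof -
  obtain x where xnz: "x \<noteq> 0" and xe: "twisted_adj E R *v x = \<mu> *s x" using ev unfolding is_eigenvalue_def by blast
  define X where "X j = (\<chi> d. x $ (j,d))" for j
  define S where "S i = (\<Sum>j\<in>{j. E i j}. X j)" for i
  have eqn: "\<mu> *s X i = R i *v S i" for i
  proof (subst cvec_eq_iff, intro allI)
    fix c
    have "(R i *v S i) $ c = (twisted_adj E R *v x) $ (i,c)" unfolding S_def X_def by (simp add: twisted_apply)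
    also have "\<dots> = \<mu> * x $ (i,c)" using xe by simp
    finally show "(\<mu> *s X i) $ c = (R i *v S i) $ c" unfolding X_def by simp
  qed
  define y where "y = (\<chi> i. norm (X i))"
  have ynn: "\<forall>i. y $ i \<ge> 0" unfolding y_def by simp
  have ynz: "y \<noteq> 0"
  proof
    assume "y = 0"
    hence "norm (X i) = 0" for i unfolding y_def cvec_eq_iff by (metis vec_lambda_beta zero_index)
    hence X0: "X i = 0" for i by simp
    have "x $ p = 0" for p
    proof -
      have "x $ p = X (fst p) $ snd p" unfolding X_def by simp
      thus ?thesis using X0 by simp
    qed
    thus False using xnz by (simp add: cvec_eq_iff)
  qed
  have normS: "norm (S i) = cmod \<mu> * y $ i" for i
  proof -
    have "norm (S i) = norm (R i *v S i)" using unitary_norm[OF U] by simp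
    also have "\<dots> = norm (\<mu> *s X i)" using eqn by simp
    also have "\<dots> = cmod \<mu> * y $ i" unfolding y_def by (simp add: norm_smult_vec)
    finally show ?thesis .
  qed
  have Ay_apply: "(Ar E *v y) $ i = (\<Sum>j\<in>{j. E i j}. norm (X j))" for i
    unfolding Ar_apply y_def by simp
  have ge: "\<forall>i. cmod \<mu> * y $ i \<le> (Ar E *v y) $ i"
    unfolding Ay_apply normS[symmetric] S_def by (simp add: norm_sum)
  from Kp[OF ynn ynz ge] have le: "cmod \<mu> \<le> lambda1" and
     eqc: "cmod \<mu> = lambda1 \<Longrightarrow> Ar E *v y = lambda1 *\<^sub>R y" by auto
  have "\<exists>z. z \<noteq> 0 \<and> (\<forall>i. R i *v z = (\<mu> / complex_of_real lambda1) *s z)" if m: "cmod \<mu> = lambda1"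
  proof -
    have Ay: "Ar E *v y = lambda1 *\<^sub>R y" using eqc[OF m] .
    have yp: "y $ i > 0" for i using POS[OF ynn ynz Ay] .
    have sumy: "(\<Sum>j\<in>{j. E i j}. y $ j) = lambda1 * y $ i" for i
      using Ay by (metis Ar_apply vector_scaleR_component real_scaleR_def)
    have normS2: "norm (S i) = lambda1 * y $ i" for i using normS m by simp
    have TE: "(lambda1 * y $ a) *\<^sub>R X b = y $ b *\<^sub>R S a" if ab: "E a b" for a b
    proof -
      have "norm (S a) = (\<Sum>j\<in>{j. E a j}. norm (X j))" using normS2 sumy unfolding y_def by simp
      from triangle_eq[of "{j. E a j}" X b, OF _ this[unfolded S_def]] ab
      have "norm (S a) *\<^sub>R X b = norm (X b) *\<^sub>R S a" unfolding S_def by simp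
      thus ?thesis using normS2 unfolding y_def by simp
    qed
    have TEc: "S j $ c = complex_of_real (lambda1 * y $ j / y $ i) * X i $ c" if "E i j" for i j c
    proof -
      have "E j i" using that symE by blast
      from TE[OF this] have "((lambda1 * y $ j) *\<^sub>R X i) $ c = (y $ i *\<^sub>R S j) $ c" by simp
      hence "complex_of_real (lambda1 * y $ j) * X i $ c = complex_of_real (y $ i) * S j $ c"
        unfolding scaleR_smult_vec by simp
      thus ?thesis using yp[of i] by (simp add: field_simps)
    qed
    have Seq: "S i $ c = complex_of_real lambda1 * X i $ c" for i c
    proof -
      define w where "w = (\<chi> i. X i $ c)"
      have Aw: "adjacency E *v w = (\<chi> i. S i $ c)"
        unfolding cvec_eq_iff adj_apply w_def S_def by (simp add: sum_component)
      have AAw: "adjacency E *v (adjacency E *v w) = (complex_of_real lambda1 * complex_of_real lambda1) *s w"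
      proof (subst cvec_eq_iff, intro allI)
        fix i
        have "(adjacency E *v (adjacency E *v w)) $ i = (\<Sum>j\<in>{j. E i j}. S j $ c)"
          unfolding Aw adj_apply by simp
        also have "\<dots> = (\<Sum>j\<in>{j. E i j}. complex_of_real (lambda1 / y $ i) * X i $ c * complex_of_real (y $ j))"
          using TEc by (intro sum.cong refl) (simp add: field_simps)
        also have "\<dots> = complex_of_real (lambda1 / y $ i) * X i $ c * complex_of_real (\<Sum>j\<in>{j. E i j}. y $ j)"
          by (simp add: sum_distrib_left)
        also have "\<dots> = (complex_of_real lambda1 * complex_of_real lambda1) * w $ i"
          unfolding sumy w_def using yp[of i] by (simp add: field_simps)
        finally show "(adjacency E *v (adjacency E *v w)) $ i = ((complex_of_real lambda1 * complex_of_real lambda1) *s w) $ i"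
          by simp
      qed
      define v' where "v' = adjacency E *v w - complex_of_real lambda1 *s w"
      have "adjacency E *v v' = (- complex_of_real lambda1) *s v'"
        unfolding v'_def matrix_vector_mult_diff_distrib vector_scalar_commute AAw
        by (simp add: cvec_eq_iff algebra_simps)
      hence "v' = 0"
      proof (rule contrapos_pp)
        assume "v' \<noteq> 0"
        hence "\<not> is_eigenvalue (adjacency E) (- complex_of_real lambda1)"
          using pf_dom[of "- complex_of_real lambda1"] pos by auto
        thus "adjacency E *v v' \<noteq> (- complex_of_real lambda1) *s v'"
          using \<open>v' \<noteq> 0\<close> unfolding is_eigenvalue_def by blast
      qed
      hence "(adjacency E *v w) $ i = (complex_of_real lambda1 *s w) $ i" unfolding v'_def by simp
      moreover have "(adjacency E *v w) $ i = S i $ c" unfolding Aw by simp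
      ultimately show ?thesis unfolding w_def by simp
    qed
    have edge: "(1 / y $ a) *\<^sub>R X a = (1 / y $ b) *\<^sub>R X b" if ab: "E a b" for a b
    proof (subst cvec_eq_iff, intro allI)
      fix c
      have "((lambda1 * y $ a) *\<^sub>R X b) $ c = (y $ b *\<^sub>R S a) $ c" using TE[OF ab] by simp
      hence "complex_of_real (lambda1 * y $ a) * X b $ c = complex_of_real (y $ b) * (complex_of_real lambda1 * X a $ c)"
        unfolding scaleR_smult_vec by (simp add: Seq)
      hence "complex_of_real (y $ a) * X b $ c = complex_of_real (y $ b) * X a $ c" using pos by (simp add: field_simps)
      thus "((1 / y $ a) *\<^sub>R X a) $ c = ((1 / y $ b) *\<^sub>R X b) $ c"
        using yp[of a] yp[of b] unfolding scaleR_smult_vec by (simp add: field_simps)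
    qed
    define i0 where "i0 = (undefined :: 'n)"
    define z where "z = (1 / y $ i0) *\<^sub>R X i0"
    have zall: "(1 / y $ a) *\<^sub>R X a = z" for a
      by (rule conn_prop[OF conn, of "\<lambda>a. (1 / y $ a) *\<^sub>R X a = z" i0]) (use edge z_def in auto)
    have Xa: "X a = y $ a *\<^sub>R z" for a
    proof -
      have "y $ a *\<^sub>R z = y $ a *\<^sub>R ((1 / y $ a) *\<^sub>R X a)" using zall[of a] by simp
      also have "\<dots> = X a" using yp[of a] by (simp add: scaleR_scaleR)
      finally show ?thesis by simp
    qed
    have znz: "z \<noteq> 0"
    proof
      assume "z = 0"
      hence "y $ i0 = 0" using Xa[of i0] unfolding y_def by simp
      thus False using yp[of i0] by simp
    qed
    have "R a *v z = (\<mu> / complex_of_real lambda1) *s z" for a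
    proof (subst cvec_eq_iff, intro allI)
      fix c
      have "(\<mu> *s X a) $ c = (R a *v S a) $ c" using eqn by simp
      moreover have "S a = complex_of_real lambda1 *s X a" using Seq by (simp add: cvec_eq_iff)
      ultimately have "\<mu> * X a $ c = (R a *v (complex_of_real lambda1 *s X a)) $ c" by simp
      also have "\<dots> = complex_of_real lambda1 * complex_of_real (y $ a) * (R a *v z) $ c"
        unfolding Xa scaleR_smult_vec by (simp add: vector_scalar_commute vector_smult_assoc)
      finally have "\<mu> * (complex_of_real (y $ a) * z $ c) = complex_of_real lambda1 * complex_of_real (y $ a) * (R a *v z) $ c"
        unfolding Xa scaleR_smult_vec by simp
      thus "(R a *v z) $ c = ((\<mu> / complex_of_real lambda1) *s z) $ c"
        using yp[of a] pos by (simp add: field_simps)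
    qed
    thus ?thesis using znz by blast
  qed
  thus ?thesis using le by blast
qed

end


definition enum_idx :: "nat \<Rightarrow> 'm::finite" where
  "enum_idx = (SOME h. bij_betw h {0..<CARD('m)} UNIV)"

lemma enum_idx_bij: "bij_betw (enum_idx :: nat \<Rightarrow> 'm::finite) {0..<CARD('m)} UNIV"
proof -
  have "\<exists>h. bij_betw h {0..<CARD('m)} (UNIV :: 'm set)" by (rule ex_bij_betw_nat_finite) simp
  thus ?thesis unfolding enum_idx_def by (rule someI_ex)
qed

lemma enum_idx_inj: "i < CARD('m::finite) \<Longrightarrow> j < CARD('m) \<Longrightarrow> (enum_idx i :: 'm) = enum_idx j \<longleftrightarrow> i = j"
  using enum_idx_bij[where 'm='m] unfolding bij_betw_def inj_on_def by auto

lemma enum_idx_surj: "\<exists>k < CARD('m::finite). (enum_idx k :: 'm) = b"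
proof -
  have "b \<in> enum_idx ` {0..<CARD('m)}" using enum_idx_bij[where 'm='m] unfolding bij_betw_def by auto
  thus ?thesis by auto
qed

lemma sum_enum: "(\<Sum>k\<in>{0..<CARD('m::finite)}. f (enum_idx k :: 'm)) = (\<Sum>b\<in>UNIV. f b)"
  by (rule sum.reindex_bij_betw[OF enum_idx_bij])

definition to_jnf :: "'a^'m::finite^'m \<Rightarrow> 'a Matrix.mat" where
  "to_jnf M = Matrix.mat CARD('m) CARD('m) (\<lambda>(i,j). M $ enum_idx i $ enum_idx j)"

lemma to_jnf_carrier: "to_jnf (M :: 'a^'m::finite^'m) \<in> carrier_mat CARD('m) CARD('m)"
  unfolding to_jnf_def by simp

lemma to_jnf_dims[simp]: "dim_row (to_jnf (M :: 'a^'m::finite^'m)) = CARD('m)" "dim_col (to_jnf (M :: 'a^'m::finite^'m)) = CARD('m)"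
  unfolding to_jnf_def by simp_all

lemma to_jnf_index: "i < CARD('m::finite) \<Longrightarrow> j < CARD('m) \<Longrightarrow> to_jnf (M :: 'a^'m^'m) $$ (i,j) = M $ enum_idx i $ enum_idx j"
  unfolding to_jnf_def by simp

lemma to_jnf_mult: "to_jnf (A ** B) = to_jnf A * to_jnf (B :: 'a::comm_ring_1^'m::finite^'m)"
proof (rule eq_matI)
  fix i j assume i: "i < dim_row (to_jnf A * to_jnf B)" and j: "j < dim_col (to_jnf A * to_jnf B)"
  hence i': "i < CARD('m)" and j': "j < CARD('m)" by simp_all
  have "(to_jnf A * to_jnf B) $$ (i,j) = (\<Sum>k\<in>{0..<CARD('m)}. A $ enum_idx i $ enum_idx k * B $ enum_idx k $ enum_idx j)"
    using i' j' by (simp add: scalar_prod_def to_jnf_index)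
  also have "\<dots> = (A ** B) $ enum_idx i $ enum_idx j"
    by (simp add: matrix_matrix_mult_def sum_enum[where f="\<lambda>b. A $ enum_idx i $ b * B $ b $ enum_idx j"])
  finally show "to_jnf (A ** B) $$ (i,j) = (to_jnf A * to_jnf B) $$ (i,j)" using i' j' by (simp add: to_jnf_index)
qed simp_all

lemma to_jnf_one: "to_jnf (Finite_Cartesian_Product.mat 1 :: 'a::comm_ring_1^'m::finite^'m) = 1\<^sub>m CARD('m)"
  by (rule eq_matI) (auto simp: to_jnf_index Finite_Cartesian_Product.mat_def enum_idx_inj)

lemma mat_pow_Suc': "mat_pow M (Suc N) = mat_pow M N ** M"
proof (induction N)
  case 0 thus ?case by simp
next
  case (Suc N)
  have "mat_pow M (Suc (Suc N)) = M ** (mat_pow M N ** M)" using Suc by simp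
  also have "\<dots> = mat_pow M (Suc N) ** M" by (simp add: matrix_mul_assoc)
  finally show ?case .
qed

lemma to_jnf_pow: "to_jnf (mat_pow (M :: 'a::comm_ring_1^'m::finite^'m) N) = to_jnf M ^\<^sub>m N"
proof (induction N)
  case 0 thus ?case by (simp add: to_jnf_one)
next
  case (Suc N) thus ?case by (simp only: mat_pow_Suc' to_jnf_mult pow_mat.simps)
qed

lemma eig_equiv: "eigenvalue (to_jnf M) \<mu> \<longleftrightarrow> is_eigenvalue (M :: complex^'m::finite^'m) \<mu>"
proof
  assume "eigenvalue (to_jnf M) \<mu>"
  then obtain w where w: "w \<in> carrier_vec CARD('m)" "w \<noteq> 0\<^sub>v CARD('m)" "to_jnf M *\<^sub>v w = \<mu> \<cdot>\<^sub>v w"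
    unfolding eigenvalue_def eigenvector_def by auto
  define v :: "complex^'m" where "v = (\<chi> b. Matrix.vec_index w (inv_into {0..<CARD('m)} enum_idx b))"
  have vk: "v $ enum_idx k = Matrix.vec_index w k" if "k < CARD('m)" for k
    unfolding v_def using that enum_idx_bij[where 'm='m] by (simp add: bij_betw_inv_into_left)
  have "M *v v = \<mu> *s v"
  proof (subst cvec_eq_iff, intro allI)
    fix b :: 'm
    obtain k where k: "k < CARD('m)" "enum_idx k = b" using enum_idx_surj by blast
    have "(M *v v) $ b = (\<Sum>k'\<in>{0..<CARD('m)}. M $ b $ enum_idx k' * v $ enum_idx k')"
      by (simp add: matrix_vector_mult_def sum_enum[where f="\<lambda>b'. M $ b $ b' * v $ b'"])
    also have "\<dots> = (\<Sum>k'\<in>{0..<CARD('m)}. to_jnf M $$ (k,k') * Matrix.vec_index w k')"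
      using k by (intro sum.cong refl) (simp add: to_jnf_index vk)
    also have "\<dots> = Matrix.vec_index (to_jnf M *\<^sub>v w) k"
      using k w(1) by (simp add: scalar_prod_def)
    also have "\<dots> = \<mu> * v $ b" using w(3) k w(1) by (simp add: vk[symmetric])
    finally show "(M *v v) $ b = (\<mu> *s v) $ b" by simp
  qed
  moreover have "v \<noteq> 0"
  proof
    assume v0: "v = 0"
    have "w = 0\<^sub>v CARD('m)"
    proof (rule eq_vecI)
      fix k assume "k < dim_vec (0\<^sub>v CARD('m) :: complex Matrix.vec)"
      hence k: "k < CARD('m)" by simp
      show "Matrix.vec_index w k = Matrix.vec_index (0\<^sub>v CARD('m)) k" using vk[OF k] v0 k by simp
    qed (use w(1) in simp)
    thus False using w(2) by simp
  qed
  ultimately show "is_eigenvalue M \<mu>" unfolding is_eigenvalue_def by blast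
next
  assume "is_eigenvalue M \<mu>"
  then obtain v where v: "v \<noteq> 0" "M *v v = \<mu> *s v" unfolding is_eigenvalue_def by blast
  define w where "w = Matrix.vec CARD('m) (\<lambda>k. v $ enum_idx k)"
  have wc: "w \<in> carrier_vec CARD('m)" unfolding w_def by simp
  have "w \<noteq> 0\<^sub>v CARD('m)"
  proof
    assume w0: "w = 0\<^sub>v CARD('m)"
    have "v $ b = 0" for b
    proof -
      obtain k where k: "k < CARD('m)" "enum_idx k = b" using enum_idx_surj by blast
      have "Matrix.vec_index w k = 0" using w0 k by simp
      thus ?thesis using k unfolding w_def by simp
    qed
    thus False using v(1) by (simp add: cvec_eq_iff)
  qed
  moreover have "to_jnf M *\<^sub>v w = \<mu> \<cdot>\<^sub>v w"
  proof (rule eq_vecI)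
    fix k assume "k < dim_vec (\<mu> \<cdot>\<^sub>v w)"
    hence k: "k < CARD('m)" unfolding w_def by simp
    have "Matrix.vec_index (to_jnf M *\<^sub>v w) k = (\<Sum>k'\<in>{0..<CARD('m)}. M $ enum_idx k $ enum_idx k' * v $ enum_idx k')"
      using k unfolding w_def by (simp add: scalar_prod_def to_jnf_index)
    also have "\<dots> = (M *v v) $ enum_idx k"
      by (simp add: matrix_vector_mult_def sum_enum[where f="\<lambda>b'. M $ enum_idx k $ b' * v $ b'"])
    also have "\<dots> = Matrix.vec_index (\<mu> \<cdot>\<^sub>v w) k" using v(2) k unfolding w_def by simp
    finally show "Matrix.vec_index (to_jnf M *\<^sub>v w) k = Matrix.vec_index (\<mu> \<cdot>\<^sub>v w) k" .
  qed (simp add: w_def)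
  ultimately show "eigenvalue (to_jnf M) \<mu>" unfolding eigenvalue_def eigenvector_def using wc by auto
qed

lemma spec_set_eq: "norm ` spectrum (to_jnf M) = {cmod \<mu> |\<mu>. is_eigenvalue (M :: complex^'m::finite^'m) \<mu>}"
  unfolding spectrum_def eig_equiv by auto

lemma spec_fin: "finite {cmod \<mu> |\<mu>. is_eigenvalue (M :: complex^'m::finite^'m) \<mu>}"
  unfolding spec_set_eq[symmetric] using card_finite_spectrum(1)[OF to_jnf_carrier[of M]] by (rule finite_imageI)

lemma spec_ne: "{cmod \<mu> |\<mu>. is_eigenvalue (M :: complex^'m::finite^'m) \<mu>} \<noteq> {}"
  unfolding spec_set_eq[symmetric] using spectrum_non_empty[OF to_jnf_carrier] by simp

lemma spec_radius_jnf: "spectral_radius (to_jnf M) = spec_radius (M :: complex^'m::finite^'m)"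
  unfolding spectral_radius_def spec_radius_def spec_set_eq ..

lemma spec_ge: "is_eigenvalue M \<mu> \<Longrightarrow> cmod \<mu> \<le> spec_radius (M :: complex^'m::finite^'m)"
  unfolding spec_radius_def by (rule Max_ge[OF spec_fin]) auto

lemma spec_lt: "(\<And>\<mu>. is_eigenvalue M \<mu> \<Longrightarrow> cmod \<mu> < r) \<Longrightarrow> spec_radius (M :: complex^'m::finite^'m) < r"
  unfolding spec_radius_def using Max_in[OF spec_fin spec_ne, of M] by auto

lemma spec_nonneg: "spec_radius (M :: complex^'m::finite^'m) \<ge> 0"
proof -
  obtain \<mu> where "is_eigenvalue M \<mu>" using spec_ne by blast
  hence "cmod \<mu> \<le> spec_radius M" by (rule spec_ge)
  thus ?thesis by (meson norm_ge_zero order_trans)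
qed



lemma scaleR_mat_vec: "((c::real) *\<^sub>R A) *v v = c *\<^sub>R (A *v (v :: complex^'m::finite))"
  for A :: "complex^'m^'m"
  by (simp add: cvec_eq_iff matrix_vector_mult_def scaleR_sum_right)

lemma scaleR_mat_mult_left: "((c::real) *\<^sub>R A) ** B = c *\<^sub>R (A ** B)" for A B :: "complex^'m::finite^'m"
  by (simp add: cvec_eq_iff matrix_matrix_mult_def scaleR_sum_right)

lemma scaleR_mat_mult_right: "A ** ((c::real) *\<^sub>R B) = c *\<^sub>R (A ** B)" for A B :: "complex^'m::finite^'m"
  by (simp add: cvec_eq_iff matrix_matrix_mult_def scaleR_sum_right)

lemma mat_pow_scaleR: "mat_pow ((c::real) *\<^sub>R A) N = (c^N) *\<^sub>R mat_pow A N" for A :: "complex^'m::finite^'m"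
  by (induction N) (simp_all add: scaleR_mat_mult_left scaleR_mat_mult_right)

lemma op_norm_bound:
  fixes P :: "complex^'m::finite^'m"
  assumes b: "\<And>a b. cmod (P $ a $ b) \<le> B"
  shows "op_norm P \<le> real CARD('m) * real CARD('m) * B"
  unfolding op_norm_def
proof (rule onorm_le)
  fix x :: "complex^'m"
  have "norm (P *v x) \<le> (\<Sum>a\<in>UNIV. norm ((P *v x) $ a))"
    unfolding norm_vec_def by (rule L2_set_le_sum) simp
  also have "\<dots> \<le> (\<Sum>a\<in>(UNIV::'m set). real CARD('m) * B * norm x)"
  proof (rule sum_mono)
    fix a :: 'm
    have "norm ((P *v x) $ a) = norm (\<Sum>b\<in>UNIV. P $ a $ b * x $ b)" by (simp add: matrix_vector_mult_def)
    also have "\<dots> \<le> (\<Sum>b\<in>UNIV. cmod (P $ a $ b) * norm (x $ b))" by (rule sum_norm_le) (simp add: norm_mult)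
    also have "\<dots> \<le> (\<Sum>b\<in>(UNIV::'m set). B * norm x)"
      by (intro sum_mono mult_mono b Finite_Cartesian_Product.norm_nth_le) (use b in \<open>auto intro: order_trans[OF norm_ge_zero]\<close>)
    also have "\<dots> = real CARD('m) * B * norm x" by simp
    finally show "norm ((P *v x) $ a) \<le> real CARD('m) * B * norm x" .
  qed
  also have "\<dots> = real CARD('m) * real CARD('m) * B * norm x" by simp
  finally show "norm (P *v x) \<le> real CARD('m) * real CARD('m) * B * norm x" .
qed

lemma pow_bound:
  fixes M :: "complex^'m::finite^'m"
  assumes sr: "spec_radius M < r" and r: "r > 0"
  shows "\<exists>C. \<forall>N. op_norm (mat_pow M N) \<le> C * r^N"
proof -
  define M' where "M' = (1/r) *\<^sub>R M"
  have "spec_radius M' < 1"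
  proof (rule spec_lt)
    fix \<mu> assume "is_eigenvalue M' \<mu>"
    then obtain v where v: "v \<noteq> 0" "M' *v v = \<mu> *s v" unfolding is_eigenvalue_def by blast
    have "M *v v = (complex_of_real r * \<mu>) *s v"
    proof -
      have "M *v v = r *\<^sub>R (M' *v v)" unfolding M'_def scaleR_mat_vec using r by simp
      thus ?thesis using v(2) by (simp add: scaleR_smult_vec vector_smult_assoc)
    qed
    hence "is_eigenvalue M (complex_of_real r * \<mu>)" using v(1) unfolding is_eigenvalue_def by blast
    hence "cmod (complex_of_real r * \<mu>) < r" using spec_ge sr by fastforce
    thus "cmod \<mu> < 1" using r by (simp add: norm_mult)
  qed
  hence "spectral_radius (to_jnf M') < 1" by (simp add: spec_radius_jnf)
  from spectral_radius_jnf_norm_bound_less_1_upper_triangular[OF to_jnf_carrier this]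
  obtain c where c: "\<And>k. norm_bound (to_jnf M' ^\<^sub>m k) c" by blast
  have ent: "cmod (mat_pow M' k $ a $ b) \<le> c" for k a b
  proof -
    obtain i where i: "i < CARD('m)" "enum_idx i = a" using enum_idx_surj by blast
    obtain j where j: "j < CARD('m)" "enum_idx j = b" using enum_idx_surj by blast
    have "norm (to_jnf (mat_pow M' k) $$ (i,j)) \<le> c" using c[of k] i j
      unfolding norm_bound_def to_jnf_pow[symmetric] by simp
    thus ?thesis using i j by (simp add: to_jnf_index)
  qed
  have "op_norm (mat_pow M N) \<le> (real CARD('m) * real CARD('m) * c) * r^N" for N
  proof -
    have "mat_pow M N = (r^N) *\<^sub>R mat_pow M' N"
      unfolding M'_def mat_pow_scaleR using r by (simp add: power_one_over)
    hence "cmod (mat_pow M N $ a $ b) \<le> r^N * c" for a b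
      using ent[of N a b] r by (simp add: norm_scaleR mult_left_mono)
    hence "op_norm (mat_pow M N) \<le> real CARD('m) * real CARD('m) * (r^N * c)" by (rule op_norm_bound)
    thus ?thesis by (simp add: algebra_simps)
  qed
  thus ?thesis by blast
qed



theorem mainTheorem6:
  fixes E :: "'n::finite \<Rightarrow> 'n \<Rightarrow> bool"
    and G :: "('g, 'b) monoid_scheme"
    and \<gamma> :: "'n \<Rightarrow> 'g"
    and \<rho> :: "'g \<Rightarrow> complex^'k::finite^'k"
    and lambda1 :: real
  assumes graph: "simple_graph E" and conn: "graph_connected E"
    and pf_eig: "is_eigenvalue (adjacency E) (complex_of_real lambda1)" and pos: "lambda1 > 0"
    and pf_dom: "\<And>\<mu>. is_eigenvalue (adjacency E) \<mu> \<Longrightarrow> \<mu> \<noteq> complex_of_real lambda1 \<Longrightarrow> cmod \<mu> < lambda1"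
    and grp: "group G" and fin: "finite (carrier G)"
    and gam: "\<And>v. \<gamma> v \<in> carrier G"
    and gen: "generate G (range \<gamma>) = carrier G"
    and irr: "irreducible_rep G \<rho>" and nontriv: "\<not> trivial_rep G \<rho>"
    and not_scalar: "\<not> (CARD('k) = 1 \<and> (\<forall>u v. \<rho> (\<gamma> u) = \<rho> (\<gamma> v)))"
  shows "spec_radius (twisted_adj E (\<lambda>i. \<rho> (\<gamma> i))) < lambda1 \<and>
         (\<forall>i j. (\<lambda>N. op_norm (mat_pow (twisted_adj E (\<lambda>i. \<rho> (\<gamma> i))) N)
                      / real (card (walks E N i j))) \<longlonglongrightarrow> 0)"
proof -
  interpret pfg E lambda1 using graph conn pf_eig pos pf_dom by unfold_locales auto
  interpret group G by (rule grp)
  define R where "R i = \<rho> (\<gamma> i)" for i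
  define M where "M = twisted_adj E R"
  have M_eq: "twisted_adj E (\<lambda>i. \<rho> (\<gamma> i)) = M" unfolding M_def R_def by simp
  have urep: "unitary_rep G \<rho>" using irr unfolding irreducible_rep_def by blast
  have unit: "\<And>g. g \<in> carrier G \<Longrightarrow> unitary_mat (\<rho> g)" using urep unfolding unitary_rep_def by blast
  have hom: "\<And>g h. g \<in> carrier G \<Longrightarrow> h \<in> carrier G \<Longrightarrow> \<rho> (g \<otimes>\<^bsub>G\<^esub> h) = \<rho> g ** \<rho> h"
    using urep unfolding unitary_rep_def by blast
  have U: "unitary_mat (R i)" for i unfolding R_def using unit gam by blast
  have rho1: "\<rho> \<one>\<^bsub>G\<^esub> = Finite_Cartesian_Product.mat 1"
  proof -
    have sq: "\<rho> \<one>\<^bsub>G\<^esub> = \<rho> \<one>\<^bsub>G\<^esub> ** \<rho> \<one>\<^bsub>G\<^esub>" using hom[OF one_closed one_closed] by simp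
    have u1: "\<rho> \<one>\<^bsub>G\<^esub> ** conj_transpose (\<rho> \<one>\<^bsub>G\<^esub>) = Finite_Cartesian_Product.mat 1"
      using unit[OF one_closed] unfolding unitary_mat_def by blast
    have "Finite_Cartesian_Product.mat 1 = (\<rho> \<one>\<^bsub>G\<^esub> ** \<rho> \<one>\<^bsub>G\<^esub>) ** conj_transpose (\<rho> \<one>\<^bsub>G\<^esub>)" using u1 sq by simp
    also have "\<dots> = \<rho> \<one>\<^bsub>G\<^esub> ** (\<rho> \<one>\<^bsub>G\<^esub> ** conj_transpose (\<rho> \<one>\<^bsub>G\<^esub>))" by (simp add: matrix_mul_assoc)
    also have "\<dots> = \<rho> \<one>\<^bsub>G\<^esub>" using u1 by simp
    finally show ?thesis by simp
  qed
  have no_top: False if ev: "is_eigenvalue M \<mu>" and m: "cmod \<mu> = lambda1" for \<mu>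
  proof -
    from twisted_eig[OF U ev[unfolded M_def]] m obtain z where znz: "z \<noteq> 0"
      and zR: "\<And>i. R i *v z = (\<mu> / complex_of_real lambda1) *s z" by blast
    define \<omega> where "\<omega> = \<mu> / complex_of_real lambda1"
    have \<omega>0: "\<omega> \<noteq> 0" unfolding \<omega>_def using m pos by auto
    have inv_gen: "\<exists>c. \<rho> g *v z = c *s z" if "g \<in> generate G (range \<gamma>)" for g
      using that
    proof (induction rule: generate.induct)
      case one
      show ?case using rho1 by (intro exI[of _ 1]) simp
    next
      case (incl h)
      then obtain i where "h = \<gamma> i" by blast
      thus ?case using zR[of i] unfolding R_def by blast
    next
      case (inv h)
      then obtain i where hi: "h = \<gamma> i" by blast
      have hc: "h \<in> carrier G" using hi gam by simp
      have "\<rho> (inv\<^bsub>G\<^esub> h) ** \<rho> h = Finite_Cartesian_Product.mat 1"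
        using hom[OF inv_closed[OF hc] hc] l_inv[OF hc] rho1 by simp
      hence "z = \<rho> (inv\<^bsub>G\<^esub> h) *v (\<rho> h *v z)" by (simp add: matrix_vector_mul_assoc)
      also have "\<dots> = \<omega> *s (\<rho> (inv\<^bsub>G\<^esub> h) *v z)" using zR[of i] hi unfolding R_def \<omega>_def
        by (simp add: vector_scalar_commute)
      finally have zz: "z = \<omega> *s (\<rho> (inv\<^bsub>G\<^esub> h) *v z)" .
      have "(1 / \<omega>) *s z = (1 / \<omega>) *s (\<omega> *s (\<rho> (inv\<^bsub>G\<^esub> h) *v z))"
        by (rule arg_cong[OF zz])
      also have "\<dots> = ((1 / \<omega>) * \<omega>) *s (\<rho> (inv\<^bsub>G\<^esub> h) *v z)"
        by (rule vector_smult_assoc)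
      also have "\<dots> = \<rho> (inv\<^bsub>G\<^esub> h) *v z" using \<omega>0 by simp
      finally have "\<rho> (inv\<^bsub>G\<^esub> h) *v z = (1 / \<omega>) *s z" by simp
      thus ?case by blast
    next
      case (eng h1 h2)
      have c1: "h1 \<in> carrier G" and c2: "h2 \<in> carrier G" using eng.hyps gen by auto
      obtain a1 where a1: "\<rho> h1 *v z = a1 *s z" using eng.IH(1) by blast
      obtain a2 where a2: "\<rho> h2 *v z = a2 *s z" using eng.IH(2) by blast
      have "\<rho> (h1 \<otimes>\<^bsub>G\<^esub> h2) *v z = \<rho> h1 *v (\<rho> h2 *v z)" using hom[OF c1 c2] by (simp add: matrix_vector_mul_assoc)
      also have "\<dots> = (a2 * a1) *s z" using a1 a2 by (simp add: vector_scalar_commute vector_smult_assoc)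
      finally show ?case by blast
    qed
    define W where "W = {c *s z | c. True}"
    have csub: "csubspace_vec W" unfolding csubspace_vec_def
    proof (intro conjI ballI allI)
      have "0 = (0::complex) *s z" by simp
      thus "0 \<in> W" unfolding W_def by blast
    next
      fix x y assume "x \<in> W" "y \<in> W"
      then obtain a b where "x = a *s z" "y = b *s z" unfolding W_def by blast
      hence "x + y = (a + b) *s z" by (simp add: vector_sadd_rdistrib)
      thus "x + y \<in> W" unfolding W_def by blast
    next
      fix c x assume "x \<in> W"
      then obtain a where "x = a *s z" unfolding W_def by blast
      hence "c *s x = (c * a) *s z" by (simp add: vector_smult_assoc)
      thus "c *s x \<in> W" unfolding W_def by blast
    qed
    have invW: "\<forall>g\<in>carrier G. \<forall>w\<in>W. \<rho> g *v w \<in> W"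
    proof (intro ballI)
      fix g w assume g: "g \<in> carrier G" and w: "w \<in> W"
      obtain a where a: "w = a *s z" using w unfolding W_def by blast
      obtain c where c: "\<rho> g *v z = c *s z" using inv_gen g gen by blast
      have "\<rho> g *v w = (a * c) *s z" using a c by (simp add: vector_scalar_commute vector_smult_assoc mult.commute)
      thus "\<rho> g *v w \<in> W" unfolding W_def by blast
    qed
    have "W = {0} \<or> W = UNIV" using irr csub invW unfolding irreducible_rep_def by blast
    moreover have "z \<in> W" unfolding W_def by (auto intro: exI[of _ 1])
    ultimately have WU: "W = UNIV" using znz by blast
    have single: "a = b" for a b :: 'k
    proof (rule ccontr)
      assume ab: "a \<noteq> b"
      obtain c where c: "axis a 1 = c *s z" using WU unfolding W_def by blast
      obtain c' where c': "axis b 1 = c' *s z" using WU unfolding W_def by blast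
      have "1 = c * z $ a" using arg_cong[OF c, of "\<lambda>v. v $ a"] by (simp add: axis_def)
      moreover have "0 = c * z $ b" using arg_cong[OF c, of "\<lambda>v. v $ b"] ab by (simp add: axis_def)
      moreover have "1 = c' * z $ b" using arg_cong[OF c', of "\<lambda>v. v $ b"] by (simp add: axis_def)
      ultimately show False by (metis mult_zero_right mult_eq_0_iff zero_neq_one)
    qed
    have card1: "CARD('k) = 1"
    proof -
      have u: "(UNIV :: 'k set) = {undefined}" using single by blast
      show ?thesis by (subst u) simp
    qed
    have "\<rho> (\<gamma> u) = \<rho> (\<gamma> v)" for u v
    proof -
      have entry: "R w $ a $ b = \<omega>" for w a b
      proof -
        have ba: "b = a" by (rule single)
        have sumU: "(\<Sum>j\<in>UNIV. f j) = f a" for f :: "'k \<Rightarrow> complex"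
        proof -
          have u: "(UNIV :: 'k set) = {a}" using single by blast
          show ?thesis by (subst u) simp
        qed
        have za: "z $ a \<noteq> 0"
        proof
          assume "z $ a = 0"
          hence "\<forall>b. z $ b = 0" by (metis single)
          hence "z = 0" by (simp add: cvec_eq_iff)
          thus False using znz by simp
        qed
        have "(R w *v z) $ a = R w $ a $ a * z $ a" by (simp add: matrix_vector_mult_def sumU)
        moreover have "(R w *v z) $ a = \<omega> * z $ a" using zR[of w] unfolding \<omega>_def by simp
        ultimately show ?thesis using za ba by simp
      qed
      show ?thesis using entry[of u] entry[of v] unfolding R_def[symmetric] by (simp add: cvec_eq_iff)
    qed
    thus False using not_scalar card1 by blast
  qed
  have sr: "spec_radius M < lambda1"
  proof (rule spec_lt)
    fix \<mu> assume ev: "is_eigenvalue M \<mu>"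
    have "cmod \<mu> \<le> lambda1" using twisted_eig[OF U ev[unfolded M_def]] by blast
    moreover have "cmod \<mu> \<noteq> lambda1" using no_top[OF ev] by blast
    ultimately show "cmod \<mu> < lambda1" by simp
  qed
  define r where "r = (spec_radius M + lambda1) / 2"
  have r0: "r > 0" and rl: "r < lambda1" and sr_r: "spec_radius M < r"
    unfolding r_def using sr spec_nonneg[of M] pos by auto
  obtain C where C: "\<And>N. op_norm (mat_pow M N) \<le> C * r^N" using pow_bound[OF sr_r r0] by blast
  have lim: "(\<lambda>N. op_norm (mat_pow M N) / real (card (walks E N i j))) \<longlonglongrightarrow> 0" for i j
  proof -
    obtain d where d0: "d > 0" and ev: "eventually (\<lambda>N. d * lambda1^N \<le> real (card (walks E N i j))) sequentially"
      using walks_lower by blast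
    have g0: "(\<lambda>N. (C / d) * (r / lambda1)^N) \<longlonglongrightarrow> 0"
      by (rule tendsto_mult_right_zero, rule LIMSEQ_power_zero) (use r0 rl pos in simp)
    show ?thesis
    proof (rule Lim_null_comparison[OF _ g0])
      show "eventually (\<lambda>N. norm (op_norm (mat_pow M N) / real (card (walks E N i j))) \<le> (C / d) * (r / lambda1)^N) sequentially"
        using ev
      proof (rule eventually_mono)
        fix N assume cN: "d * lambda1^N \<le> real (card (walks E N i j))"
        have pN: "d * lambda1^N > 0" using d0 pos by simp
        have on0: "op_norm (mat_pow M N) \<ge> 0" unfolding op_norm_def
          by (rule onorm_pos_le[OF matrix_vector_mul_bounded_linear])
        have "norm (op_norm (mat_pow M N) / real (card (walks E N i j))) = op_norm (mat_pow M N) / real (card (walks E N i j))"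
          using on0 by simp
        also have "\<dots> \<le> op_norm (mat_pow M N) / (d * lambda1^N)"
          using on0 pN cN by (intro divide_left_mono) auto
        also have "\<dots> \<le> C * r^N / (d * lambda1^N)" using C[of N] pN by (intro divide_right_mono) auto
        also have "\<dots> = (C / d) * (r / lambda1)^N" using d0 pos by (simp add: power_divide)
        finally show "norm (op_norm (mat_pow M N) / real (card (walks E N i j))) \<le> (C / d) * (r / lambda1)^N" .
      qed
    qed
  qed
  show ?thesis unfolding M_eq using sr lim by blast
qed


end
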